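(* Let $\tau$ be a $T_1$-topology on the bicyclic monoid $\mathcal{C}(p,q)$ such that $(\mathcal{C}(p,q),\tau)$ is a topological inverse semigroup (the semigroup operation is jointly continuous and the inversion is continuous). If there exists a point $q^ip^j\in\mathcal{C}(p,q)$ such that the subspace $\updownarrow_{\preceq} q^ip^j$ of $(\mathcal{C}(p,q),\tau)$ is quasi-regular at $q^ip^j$, then $\tau$ is discrete.
   Context: The bicyclic monoid $\mathcal{C}(p,q)$ is the monoid with identity $1$ generated by two elements $p,q$ subject only to $pq=1$. Every element has a unique form $q^ip^j$ with $i,j\in\omega$, and multiplication is $q^kp^l\cdot q^mp^n = q^{k-l+m}p^n$ if $l<m$, $=q^kp^n$ if $l=m$, $=q^kp^{l-m+n}$ if $l>m$. It is an inverse semigroup with $(q^ip^j)^{-1}=q^jp^i$. The natural partial order $\preceq$ on it is: $s\preceq t$ iff $s=te$ for some idempotent $e$; equivalently $q^ip^j\preceq q^sp^t$ iff $i\ge s$ and $i-j=s-t$. For $x\in\mathcal{C}(p,q)$, $\uparrow_{\preceq}x=\{y: x\preceq y\}$, $\downarrow_{\preceq}x=\{y: y\preceq x\}$, and $\updownarrow_{\preceq}x=\uparrow_{\preceq}x\cup\downarrow_{\preceq}x$ (so $\updownarrow_{\preceq}q^ip^j=\{q^sp^t: s-t=i-j\}$). A subspace $Y$ of a topological space is quasi-regular at a point $x\in Y$ if for every open neighbourhood $U$ of $x$ in $Y$ there is a nonempty open subset $V$ of $Y$ with $\mathrm{cl}_Y(V)\subseteq U$. *)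

theory Defs
  imports "HOL-Analysis.Analysis"
begin

text \<open>Elements of the bicyclic monoid C(p,q): the pair (i,j) stands for q^i p^j.\<close>
type_synonym bicyclic = "nat \<times> nat"

definition bc_mult :: "bicyclic \<Rightarrow> bicyclic \<Rightarrow> bicyclic" where
  "bc_mult x y = (case x of (k,l) \<Rightarrow> case y of (m,n) \<Rightarrow>
     if l < m then (k + m - l, n) else if l = m then (k, n) else (k, l - m + n))"

definition bc_inv :: "bicyclic \<Rightarrow> bicyclic" where
  "bc_inv x = (case x of (i,j) \<Rightarrow> (j,i))"

definition bc_idempotent :: "bicyclic \<Rightarrow> bool" where
  "bc_idempotent e \<longleftrightarrow> bc_mult e e = e"

definition bc_le :: "bicyclic \<Rightarrow> bicyclic \<Rightarrow> bool" where
  "bc_le s t \<longleftrightarrow> (\<exists>e. bc_idempotent e \<and> s = bc_mult t e)"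

definition bc_updown :: "bicyclic \<Rightarrow> bicyclic set" where
  "bc_updown x = {y. bc_le x y} \<union> {y. bc_le y x}"

definition quasi_regular_at :: "'a topology \<Rightarrow> 'a \<Rightarrow> bool" where
  "quasi_regular_at Y x \<longleftrightarrow>
     (\<forall>U. openin Y U \<and> x \<in> U \<longrightarrow>
        (\<exists>V. openin Y V \<and> V \<noteq> {} \<and> Y closure_of V \<subseteq> U))"

end

theory Submission
  imports Defs
begin

lemma bcm: "bc_mult (k,l) (m,n) = (if l < m then (k + m - l, n) else if l = m then (k, n) else (k, l - m + n))"
  by (simp add: bc_mult_def)

lemma bcinv: "bc_inv (i,j) = (j,i)"
  by (simp add: bc_inv_def)

lemma open_minus_finite:
  assumes "topspace \<tau> = UNIV" "t1_space \<tau>" "openin \<tau> Ob" "finite F"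
  shows "openin \<tau> (Ob - F)"
proof -
  have "closedin \<tau> F" using assms t1_space_closedin_finite by blast
  then show ?thesis using assms(3) by (simp add: openin_diff)
qed

lemma mcont:
  assumes "continuous_map (prod_topology \<tau> \<tau>) \<tau> (\<lambda>(x, y). bc_mult x y)"
    "continuous_map \<tau> \<tau> f" "continuous_map \<tau> \<tau> g"
  shows "continuous_map \<tau> \<tau> (\<lambda>y. bc_mult (f y) (g y))"
proof -
  have "continuous_map \<tau> (prod_topology \<tau> \<tau>) (\<lambda>y. (f y, g y))"
    using assms by (simp add: continuous_map_paired)
  then have "continuous_map \<tau> \<tau> ((\<lambda>(x, y). bc_mult x y) \<circ> (\<lambda>y. (f y, g y)))"
    using continuous_map_compose assms(1) by blast
  then show ?thesis by (simp add: o_def)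
qed

lemma preim:
  assumes "topspace \<tau> = UNIV" "continuous_map \<tau> \<tau> f" "openin \<tau> Ob"
  shows "openin \<tau> {y. f y \<in> Ob}"
  using openin_continuous_map_preimage[OF assms(2,3)] assms(1) by simp

lemma cconst: "topspace \<tau> = UNIV \<Longrightarrow> continuous_map \<tau> \<tau> (\<lambda>y. c)"
  by simp

lemma all_iso:
  assumes top: "topspace \<tau> = UNIV" and t1: "t1_space \<tau>"
    and m: "continuous_map (prod_topology \<tau> \<tau>) \<tau> (\<lambda>(x, y). bc_mult x y)"
    and one: "openin \<tau> {(0,0)}"
  shows "\<tau> = discrete_topology UNIV"
proof -
  have "openin \<tau> {x}" for x
  proof -
    obtain i j where x: "x = (i,j)" by fastforce
    let ?h = "\<lambda>y. bc_mult (bc_mult (0,i) y) (j,0)"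
    have hc: "continuous_map \<tau> \<tau> ?h"
      by (intro mcont[OF m] cconst[OF top] continuous_map_id[unfolded id_def]) 
    have o1: "openin \<tau> {y. ?h y \<in> {(0,0)}}" by (rule preim[OF top hc one])
    have sub: "{y. ?h y \<in> {(0,0)}} \<subseteq> {..i} \<times> {..j}"
    proof
      fix y assume "y \<in> {y. ?h y \<in> {(0,0)}}"
      moreover obtain s t where "y = (s,t)" by fastforce
      ultimately show "y \<in> {..i} \<times> {..j}"
        by (auto simp: bcm split: if_splits)
    qed
    have hx: "?h x = (0,0)" by (simp add: x bcm)
    have "{x} = {y. ?h y \<in> {(0,0)}} - (({..i} \<times> {..j}) - {x})"
      using sub hx by auto
    moreover have "openin \<tau> ({y. ?h y \<in> {(0,0)}} - (({..i} \<times> {..j}) - {x}))"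
      by (rule open_minus_finite[OF top t1 o1]) simp
    ultimately show ?thesis by simp
  qed
  then show ?thesis using top discrete_topology_unique[of UNIV \<tau>] by auto
qed

lemma claimA:
  assumes top: "topspace \<tau> = UNIV" and t1: "t1_space \<tau>"
    and mul: "continuous_map (prod_topology \<tau> \<tau>) \<tau> (\<lambda>(x, y). bc_mult x y)"
    and inv: "continuous_map \<tau> \<tau> bc_inv"
    and ob: "openin \<tau> Ob" and mo: "(mm,mm) \<in> Ob" and nn: "\<forall>n>N. (n,n) \<notin> Ob"
  shows "openin \<tau> {(0,0)}"
proof -
  define O2 where "O2 = Ob - (\<lambda>k. (k,k)) ` ({..N} - {mm})"
  have o1: "openin \<tau> O2" unfolding O2_def by (rule open_minus_finite[OF top t1 ob]) simp
  have oe: "(n,n) \<in> O2 \<longleftrightarrow> n = mm" for n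
  proof
    assume h: "(n,n) \<in> O2"
    show "n = mm"
    proof (rule ccontr)
      assume ne: "n \<noteq> mm"
      show False
      proof (cases "n \<le> N")
        case True
        then have "(n,n) \<in> (\<lambda>k. (k,k)) ` ({..N} - {mm})" using ne by blast
        then show False using h unfolding O2_def by blast
      next
        case False
        then show False using h nn unfolding O2_def by auto
      qed
    qed
  next
    assume "n = mm"
    then show "(n,n) \<in> O2" using mo unfolding O2_def by auto
  qed
  define F where "F = (\<lambda>y. bc_mult (bc_mult (mm,0) (bc_mult y (bc_inv y))) (0,mm))"
  define G where "G = (\<lambda>y. bc_mult (bc_mult (mm,0) (bc_mult (bc_inv y) y)) (0,mm))"
  have fc: "continuous_map \<tau> \<tau> F" unfolding F_def
    by (intro mcont[OF mul] cconst[OF top] continuous_map_id[unfolded id_def] inv)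
  have gc: "continuous_map \<tau> \<tau> G" unfolding G_def
    by (intro mcont[OF mul] cconst[OF top] continuous_map_id[unfolded id_def] inv)
  have fv: "F (s,t) = (mm+s, mm+s)" for s t
    unfolding F_def by (auto simp: bcm bcinv)
  have gv: "G (s,t) = (mm+t, mm+t)" for s t
    unfolding G_def by (auto simp: bcm bcinv)
  have "{y. F y \<in> O2} \<inter> {y. G y \<in> O2} = {(0,0)}"
  proof -
    have "y \<in> {y. F y \<in> O2} \<inter> {y. G y \<in> O2} \<longleftrightarrow> y = (0,0)" for y
    proof -
      obtain s t where y: "y = (s,t)" by fastforce
      show ?thesis unfolding y by (simp add: fv gv oe)
    qed
    then show ?thesis by blast
  qed
  moreover have "openin \<tau> ({y. F y \<in> O2} \<inter> {y. G y \<in> O2})"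
    using preim[OF top fc o1] preim[OF top gc o1] by (rule openin_Int)
  ultimately show ?thesis by simp
qed

lemma dmult: "b + c \<le> n \<Longrightarrow> bc_mult (a+c, b+c) (n,n) = (a+(n-b), b+(n-b))"
  by (auto simp: bcm)

lemma dmult0: "b \<le> n \<Longrightarrow> bc_mult (a, b) (n,n) = (a+(n-b), b+(n-b))"
  by (auto simp: bcm)

lemma dmult2: "mm \<le> c \<Longrightarrow> bc_mult (a+c, b+c) (b+mm,b+mm) = (a+c, b+c)"
  by (auto simp: bcm)

lemma core:
  assumes top: "topspace \<tau> = UNIV"
    and mul: "continuous_map (prod_topology \<tau> \<tau>) \<tau> (\<lambda>(x, y). bc_mult x y)"
    and cA: "\<And>m Ob N. openin \<tau> Ob \<Longrightarrow> (m,m) \<in> Ob \<Longrightarrow> \<exists>n>N. (n,n) \<in> Ob"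
    and V: "openin \<tau> V" and W: "openin \<tau> W"
    and dc: "(a+c, b+c) \<in> V" and dm: "(a+mm, b+mm) \<in> W"
  shows "\<exists>t. (a+t, b+t) \<in> V \<and> (a+t, b+t) \<in> W"
proof -
  let ?g = "\<lambda>y. bc_mult (a,b) y"
  have gc: "continuous_map \<tau> \<tau> ?g"
    by (intro mcont[OF mul] cconst[OF top] continuous_map_id[unfolded id_def])
  have P: "openin \<tau> {y. ?g y \<in> V}" by (rule preim[OF top gc V])
  have "(b+c, b+c) \<in> {y. ?g y \<in> V}" using dc dmult0[of b "b+c" a] by simp
  then obtain n where n: "n > b+c+mm" "(n,n) \<in> {y. ?g y \<in> V}" using cA[OF P] by blast
  define c' where "c' = n - b"
  have c'1: "(a+c', b+c') \<in> V" using n dmult0[of b n a] by (simp add: c'_def)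
  have c'2: "c' > mm" using n by (simp add: c'_def)
  have M: "openin (prod_topology \<tau> \<tau>) {z. (\<lambda>(x, y). bc_mult x y) z \<in> V}"
    using openin_continuous_map_preimage[OF mul V] top by simp
  have mem: "((a+c', b+c'), (b+mm,b+mm)) \<in> {z. (\<lambda>(x, y). bc_mult x y) z \<in> V}"
    using c'1 c'2 dmult2[of mm c' a b] by simp
  obtain A B where AB: "openin \<tau> A" "openin \<tau> B" "(a+c', b+c') \<in> A" "(b+mm,b+mm) \<in> B"
    "A \<times> B \<subseteq> {z. (\<lambda>(x, y). bc_mult x y) z \<in> V}"
    using openin_prod_topology_alt[THEN iffD1, OF M, rule_format, OF mem] by blast
  have Q: "openin \<tau> (B \<inter> {y. ?g y \<in> W})" using AB(2) preim[OF top gc W] by blast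
  have "(b+mm,b+mm) \<in> B \<inter> {y. ?g y \<in> W}" using AB(4) dm dmult0[of b "b+mm" a] by simp
  then obtain k where k: "k > b+c'" "(k,k) \<in> B \<inter> {y. ?g y \<in> W}" using cA[OF Q] by blast
  have "((a+c', b+c'), (k,k)) \<in> A \<times> B" using AB(3) k by simp
  then have "((a+c', b+c'), (k,k)) \<in> {z. (\<lambda>(x, y). bc_mult x y) z \<in> V}"
    using AB(5) by (rule subsetD[rotated])
  then have "bc_mult (a+c', b+c') (k,k) \<in> V" by simp
  then have "(a+(k-b), b+(k-b)) \<in> V" using dmult[of b c' k a] k by simp
  moreover have "(a+(k-b), b+(k-b)) \<in> W" using k dmult0[of b k a] by simp
  ultimately show ?thesis by blast
qed

lemma idem: "bc_idempotent (x,y) \<longleftrightarrow> x = y"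
  by (auto simp: bc_idempotent_def bcm split: if_splits)

lemma le_iff: "bc_le (s1,s2) (a,b) \<longleftrightarrow> b \<le> s2 \<and> s1 + b = a + s2"
proof
  assume "bc_le (s1,s2) (a,b)"
  then obtain e where e: "bc_idempotent e" "(s1,s2) = bc_mult (a,b) e" unfolding bc_le_def by blast
  obtain n n' where en: "e = (n,n')" by fastforce
  then have "n' = n" using e idem by simp
  then have eq: "(s1,s2) = bc_mult (a,b) (n,n)" using e en by simp
  show "b \<le> s2 \<and> s1 + b = a + s2"
  proof (cases "b < n")
    case True then show ?thesis using eq by (simp add: bcm)
  next
    case False then show ?thesis using eq by (simp add: bcm split: if_splits)
  qed
next
  assume h: "b \<le> s2 \<and> s1 + b = a + s2"
  have "bc_idempotent (s2,s2)" by (simp add: idem)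
  moreover have "(s1,s2) = bc_mult (a,b) (s2,s2)" using h by (auto simp: bcm)
  ultimately show "bc_le (s1,s2) (a,b)" unfolding bc_le_def by blast
qed

lemma updown: "bc_updown (i,j) = {(s,t). s + j = t + i}"
proof -
  have "y \<in> bc_updown (i,j) \<longleftrightarrow> y \<in> {(s,t). s + j = t + i}" for y
  proof -
    obtain s t where y: "y = (s,t)" by fastforce
    have "y \<in> bc_updown (i,j) \<longleftrightarrow> (t \<le> j \<and> i + t = s + j) \<or> (j \<le> t \<and> s + j = i + t)"
      unfolding y bc_updown_def by (simp add: le_iff)
    also have "\<dots> \<longleftrightarrow> s + j = t + i" by arith
    finally show ?thesis unfolding y by simp
  qed
  then show ?thesis by blast
qed

theorem theorem2:
  fixes \<tau> :: "bicyclic topology"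
  assumes "topspace \<tau> = UNIV"
    and "t1_space \<tau>"
    and "continuous_map (prod_topology \<tau> \<tau>) \<tau> (\<lambda>(x, y). bc_mult x y)"
    and "continuous_map \<tau> \<tau> bc_inv"
    and "\<exists>i j. quasi_regular_at (subtopology \<tau> (bc_updown (i, j))) (i, j)"
  shows "\<tau> = discrete_topology UNIV"
proof (rule ccontr)
  assume nd: "\<tau> \<noteq> discrete_topology UNIV"
  have cA: "\<exists>n>N. (n,n) \<in> Ob" if "openin \<tau> Ob" "(m,m) \<in> Ob" for m Ob N
  proof (rule ccontr)
    assume "\<not> (\<exists>n>N. (n,n) \<in> Ob)"
    then have "\<forall>n>N. (n,n) \<notin> Ob" by blast
    then have "openin \<tau> {(0,0)}" using claimA[OF assms(1-4) that] by blast
    then have "\<tau> = discrete_topology UNIV" using all_iso[OF assms(1-3)] by blast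
    then show False using nd by blast
  qed
  obtain i j where qr: "quasi_regular_at (subtopology \<tau> (bc_updown (i, j))) (i, j)"
    using assms(5) by blast
  define a where "a = i - min i j"
  define b where "b = j - min i j"
  define mx where "mx = min i j"
  define d where "d = (\<lambda>t. (a+t, b+t))"
  have Deq: "bc_updown (i,j) = range d"
  proof -
    have "{(s,t). s + j = t + i} = range d"
    proof
      show "range d \<subseteq> {(s,t). s + j = t + i}" by (auto simp: d_def a_def b_def)
    next
      show "{(s,t). s + j = t + i} \<subseteq> range d"
      proof
        fix y assume "y \<in> {(s,t). s + j = t + i}"
        moreover obtain s t where y: "y = (s,t)" by fastforce
        ultimately have h: "s + j = t + i" by simp
        have "(s,t) = d (t - b)" using h by (auto simp: d_def a_def b_def)
        then show "y \<in> range d" using y by simp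
      qed
    qed
    then show ?thesis by (simp add: updown)
  qed
  have xd: "(i,j) = d mx" by (simp add: d_def a_def b_def mx_def)
  let ?z = "d (mx+1)"
  let ?S = "subtopology \<tau> (range d)"
  have Uo: "openin ?S (range d - {?z})"
  proof -
    have "openin \<tau> (UNIV - {?z})"
      using open_minus_finite[OF assms(1,2), of UNIV "{?z}"] assms(1) openin_topspace[of \<tau>] by simp
    moreover have "range d - {?z} = (UNIV - {?z}) \<inter> range d" by blast
    ultimately show ?thesis unfolding openin_subtopology by blast
  qed
  have xU: "(i,j) \<in> range d - {?z}" using xd by (auto simp: d_def)
  obtain V where V: "openin ?S V" "V \<noteq> {}" "?S closure_of V \<subseteq> range d - {?z}"
    using qr Uo xU unfolding quasi_regular_at_def Deq by blast
  obtain V' where V': "openin \<tau> V'" "V = V' \<inter> range d" using V(1) unfolding openin_subtopology by blast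
  obtain c where c: "d c \<in> V" using V(2) V'(2) by blast
  have "?z \<in> ?S closure_of V"
    unfolding in_closure_of
  proof (intro conjI allI impI)
    show "?z \<in> topspace ?S" using assms(1) by simp
  next
    fix T assume T: "?z \<in> T \<and> openin ?S T"
    then obtain W' where W': "openin \<tau> W'" "T = W' \<inter> range d" unfolding openin_subtopology by blast
    have "\<exists>t. (a+t, b+t) \<in> V' \<and> (a+t, b+t) \<in> W'"
      by (rule core[OF assms(1,3) cA V'(1) W'(1), where c=c and mm="mx+1" and a=a and b=b])
         (use c V'(2) T W'(2) in \<open>auto simp: d_def\<close>)
    then obtain t where "d t \<in> V'" "d t \<in> W'" by (auto simp: d_def)
    then show "\<exists>y. y \<in> V \<and> y \<in> T" using V'(2) W'(2) by blast
  qed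
  then show False using V(3) by blast
qed

end
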